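(* Let $X$ be a linearly ordered set. A linear basis of the free $\mathrm{BiCom}$-algebra $\mathrm{BiCom}\langle X\rangle$ consists of the words $x_1*\dots*x_t*(y_1\odot\dots\odot y_k)$, with $t\ge 0$, $k\ge 1$, $x_i,y_j\in X$, and $x_1\le\dots\le x_t\le y_1\le\dots\le y_k$ (for $t=0$ the word is $y_1\odot\dots\odot y_k$; bracketings inside $*$-products and $\odot$-products are irrelevant by associativity).
   Context: A $\mathrm{BiCom}$-algebra is a vector space with two bilinear operations $*$ and $\odot$, each associative and commutative, satisfying $(x\odot y)*z=x\odot(y*z)$. *)

theory Defs
  imports Main
begin

text \<open>Free magma on X with two binary operations (star and odot): these are the
  nonassociative, noncommutative words; their finitely supported 'k-linear
  combinations form the free (absolutely free) algebra with two bilinear operations.\<close>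
datatype 'x bterm = V 'x | St "'x bterm" "'x bterm" | Od "'x bterm" "'x bterm"

type_synonym ('x, 'k) vec = "'x bterm \<Rightarrow> 'k"

definition fin_supp :: "('x, 'k::zero) vec \<Rightarrow> bool" where
  "fin_supp f \<longleftrightarrow> finite {t. f t \<noteq> 0}"

definition mon :: "'x bterm \<Rightarrow> ('x, 'k::zero_neq_one) vec" where
  "mon t = (\<lambda>s. if s = t then 1 else 0)"

definition lincomb :: "('x bterm \<Rightarrow> 'k::field) \<Rightarrow> 'x bterm set \<Rightarrow> ('x, 'k) vec" where
  "lincomb c S = (\<lambda>s. \<Sum>w\<in>S. c w * mon w s)"

text \<open>Bilinear extension of the operations, multiplying a vector by a monomial
  on the right (f * u) or on the left (u * f).\<close>
definition st_r :: "('x, 'k::zero) vec \<Rightarrow> 'x bterm \<Rightarrow> ('x, 'k) vec" where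
  "st_r f u = (\<lambda>s. case s of St a b \<Rightarrow> if b = u then f a else 0 | _ \<Rightarrow> 0)"
definition st_l :: "'x bterm \<Rightarrow> ('x, 'k::zero) vec \<Rightarrow> ('x, 'k) vec" where
  "st_l u f = (\<lambda>s. case s of St a b \<Rightarrow> if a = u then f b else 0 | _ \<Rightarrow> 0)"
definition od_r :: "('x, 'k::zero) vec \<Rightarrow> 'x bterm \<Rightarrow> ('x, 'k) vec" where
  "od_r f u = (\<lambda>s. case s of Od a b \<Rightarrow> if b = u then f a else 0 | _ \<Rightarrow> 0)"
definition od_l :: "'x bterm \<Rightarrow> ('x, 'k::zero) vec \<Rightarrow> ('x, 'k) vec" where
  "od_l u f = (\<lambda>s. case s of Od a b \<Rightarrow> if a = u then f b else 0 | _ \<Rightarrow> 0)"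

definition diff_mon :: "'x bterm \<Rightarrow> 'x bterm \<Rightarrow> ('x, 'k::field) vec" where
  "diff_mon p q = (\<lambda>s. mon p s - mon q s)"

text \<open>Defining identities of BiCom-algebras (multilinear, so instances on words suffice).\<close>
definition bicom_rels :: "('x, 'k::field) vec set" where
  "bicom_rels = (\<Union>a b c.
     { diff_mon (St (St a b) c) (St a (St b c)),
       diff_mon (St a b) (St b a),
       diff_mon (Od (Od a b) c) (Od a (Od b c)),
       diff_mon (Od a b) (Od b a),
       diff_mon (St (Od a b) c) (Od a (St b c)) })"

inductive_set bicom_ideal :: "('x, 'k::field) vec set" where
  rel: "r \<in> bicom_rels \<Longrightarrow> r \<in> bicom_ideal"
| zero: "(\<lambda>_. 0) \<in> bicom_ideal"
| add: "f \<in> bicom_ideal \<Longrightarrow> g \<in> bicom_ideal \<Longrightarrow> (\<lambda>s. f s + g s) \<in> bicom_ideal"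
| smult: "f \<in> bicom_ideal \<Longrightarrow> (\<lambda>s. a * f s) \<in> bicom_ideal"
| str: "f \<in> bicom_ideal \<Longrightarrow> st_r f u \<in> bicom_ideal"
| stl: "f \<in> bicom_ideal \<Longrightarrow> st_l u f \<in> bicom_ideal"
| odr: "f \<in> bicom_ideal \<Longrightarrow> od_r f u \<in> bicom_ideal"
| odl: "f \<in> bicom_ideal \<Longrightarrow> od_l u f \<in> bicom_ideal"

fun od_word :: "'x list \<Rightarrow> 'x bterm" where
  "od_word [] = undefined"
| "od_word [y] = V y"
| "od_word (y # ys) = Od (V y) (od_word ys)"

fun nf_word :: "'x list \<Rightarrow> 'x list \<Rightarrow> 'x bterm" where
  "nf_word [] ys = od_word ys"
| "nf_word (x # xs) ys = St (V x) (nf_word xs ys)"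

definition basis_words :: "'x::linorder bterm set" where
  "basis_words = {nf_word xs ys | xs ys. ys \<noteq> [] \<and> sorted (xs @ ys)}"

end

theory Submission imports Defs "HOL-Library.Multiset" begin

fun leaves :: "'x bterm \<Rightarrow> 'x multiset" where
  "leaves (V x) = {#x#}"
| "leaves (St a b) = leaves a + leaves b"
| "leaves (Od a b) = leaves a + leaves b"

fun cnt :: "'x bterm \<Rightarrow> nat" where
  "cnt (V x) = 0"
| "cnt (St a b) = cnt a + cnt b + 1"
| "cnt (Od a b) = cnt a + cnt b"

definition ev :: "'x bterm \<Rightarrow> 'x multiset \<times> nat" where
  "ev s = (leaves s, cnt s)"

lemma leaves_ne: "leaves s \<noteq> {#}"
  by (induction s) auto

lemma size_leaves: "size (leaves s) \<ge> 1"
  using leaves_ne[of s] by (cases "leaves s") auto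

lemma fin_T: "finite X \<Longrightarrow> finite {s. set_mset (leaves s) \<subseteq> X \<and> size (leaves s) \<le> n}"
proof (induction n)
  case 0
  have "{s. set_mset (leaves s) \<subseteq> X \<and> size (leaves s) \<le> 0} = {}" using leaves_ne by auto
  then show ?case by (metis finite.emptyI)
next
  case (Suc n)
  let ?T = "{s. set_mset (leaves s) \<subseteq> X \<and> size (leaves s) \<le> n}"
  have "{s. set_mset (leaves s) \<subseteq> X \<and> size (leaves s) \<le> Suc n}
     \<subseteq> V ` X \<union> (case_prod St) ` (?T \<times> ?T) \<union> (case_prod Od) ` (?T \<times> ?T)"
  proof
    fix s assume s: "s \<in> {s. set_mset (leaves s) \<subseteq> X \<and> size (leaves s) \<le> Suc n}"
    show "s \<in> V ` X \<union> (case_prod St) ` (?T \<times> ?T) \<union> (case_prod Od) ` (?T \<times> ?T)"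
    proof (cases s)
      case (V x) then show ?thesis using s by auto
    next
      case (St a b)
      then have "a \<in> ?T" "b \<in> ?T" using s size_leaves[of a] size_leaves[of b] by auto
      then show ?thesis using St by auto
    next
      case (Od a b)
      then have "a \<in> ?T" "b \<in> ?T" using s size_leaves[of a] size_leaves[of b] by auto
      then show ?thesis using Od by auto
    qed
  qed
  then show ?case using Suc by (auto intro: finite_subset)
qed

lemma fin_fiber: "finite {s. ev s = p}"
proof -
  have "{s. ev s = p} \<subseteq> {s. set_mset (leaves s) \<subseteq> set_mset (fst p) \<and> size (leaves s) \<le> size (fst p)}"
    by (auto simp: ev_def)
  then show ?thesis using fin_T[of "set_mset (fst p)" "size (fst p)"] by (auto intro: finite_subset)
qed

definition Phi :: "('x, 'k::field) vec \<Rightarrow> 'x multiset \<times> nat \<Rightarrow> 'k" where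
  "Phi f p = sum f {s. ev s = p}"

lemma Phi_mon: "Phi (mon a) p = (if ev a = p then 1 else 0)"
  unfolding Phi_def mon_def using fin_fiber[of p] by (simp add: sum.delta)

lemma Phi_trans:
  assumes "inj C" "\<And>a b. ev (C a) = ev (C b) \<longleftrightarrow> ev a = ev b"
    "\<And>s. s \<notin> range C \<Longrightarrow> h s = 0" "\<And>a. h (C a) = f a" "\<And>q. Phi f q = 0"
  shows "Phi h p = 0"
proof -
  let ?G = "{a. ev (C a) = p}"
  have sub: "C ` ?G \<subseteq> {s. ev s = p}" by auto
  have "Phi h p = sum h (C ` ?G)"
    unfolding Phi_def
    by (rule sum.mono_neutral_right[OF fin_fiber sub]) (use assms(3) in force)
  also have "\<dots> = sum f ?G"
    using assms(1,4) by (simp add: sum.reindex inj_on_def inj_def)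
  also have "\<dots> = 0"
  proof (cases "?G = {}")
    case True then show ?thesis by simp
  next
    case False
    then obtain a0 where "ev (C a0) = p" by auto
    then have "?G = {a. ev a = ev a0}" using assms(2) by auto
    then show ?thesis using assms(5)[of "ev a0"] by (simp add: Phi_def)
  qed
  finally show ?thesis .
qed

lemma Phi_ideal: "g \<in> bicom_ideal \<Longrightarrow> Phi g p = 0"
proof (induction g arbitrary: p rule: bicom_ideal.induct)
  case (rel r)
  then obtain a b where "r = diff_mon a b" "ev a = ev b"
    unfolding bicom_rels_def by (auto simp: ev_def add_ac)
  moreover have "Phi (diff_mon a b) p = Phi (mon a) p - Phi (mon b) p"
    unfolding Phi_def diff_mon_def by (simp add: sum_subtractf)
  ultimately show ?case by (simp add: Phi_mon)
next
  case zero then show ?case by (simp add: Phi_def)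
next
  case (add f g) then show ?case by (simp add: Phi_def sum.distrib)
next
  case (smult f a) then show ?case by (simp add: Phi_def sum_distrib_left[symmetric])
next
  case (str f u) show ?case
    by (rule Phi_trans[where C="\<lambda>a. St a u" and f=f])
       (auto simp: inj_def ev_def st_r_def str split: bterm.splits)
next
  case (stl f u) show ?case
    by (rule Phi_trans[where C="\<lambda>a. St u a" and f=f])
       (auto simp: inj_def ev_def st_l_def stl split: bterm.splits)
next
  case (odr f u) show ?case
    by (rule Phi_trans[where C="\<lambda>a. Od a u" and f=f])
       (auto simp: inj_def ev_def od_r_def odr split: bterm.splits)
next
  case (odl f u) show ?case
    by (rule Phi_trans[where C="\<lambda>a. Od u a" and f=f])
       (auto simp: inj_def ev_def od_l_def odl split: bterm.splits)
qed


definition eqv :: "'k::field itself \<Rightarrow> 'x bterm \<Rightarrow> 'x bterm \<Rightarrow> bool" where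
  "eqv K p q \<longleftrightarrow> (diff_mon p q :: ('x,'k) vec) \<in> bicom_ideal"

lemma eqv_refl:
  fixes K :: "'k::field itself" and p q r a a' b b' :: "'x bterm"
  shows "eqv K p p"
proof -
  have "(diff_mon p p :: ('x,'k) vec) = (\<lambda>_. 0)" by (auto simp: diff_mon_def)
  then show ?thesis unfolding eqv_def using bicom_ideal.zero by metis
qed

lemma eqv_sym:
  fixes K :: "'k::field itself" and p q r a a' b b' :: "'x bterm"
  assumes "eqv K p q"
  shows "eqv K q p"
proof -
  note assms
  then have "(\<lambda>s. (-1) * (diff_mon p q :: ('x,'k) vec) s) \<in> bicom_ideal"
    unfolding eqv_def by (rule bicom_ideal.smult)
  moreover have "(\<lambda>s. (-1) * (diff_mon p q :: ('x,'k) vec) s) = diff_mon q p"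
    by (auto simp: diff_mon_def)
  ultimately show ?thesis unfolding eqv_def by simp
qed

lemma eqv_trans[trans]:
  fixes K :: "'k::field itself" and p q r a a' b b' :: "'x bterm"
  assumes "eqv K p q" "eqv K q r"
  shows "eqv K p r"
proof -
  note assms
  then have "(\<lambda>s. (diff_mon p q :: ('x,'k) vec) s + diff_mon q r s) \<in> bicom_ideal"
    unfolding eqv_def by (rule bicom_ideal.add)
  moreover have "(\<lambda>s. (diff_mon p q :: ('x,'k) vec) s + diff_mon q r s) = diff_mon p r"
    by (auto simp: diff_mon_def)
  ultimately show ?thesis unfolding eqv_def by simp
qed

lemma eqv_rel: "(diff_mon p q :: ('x,'k::field) vec) \<in> bicom_rels \<Longrightarrow> eqv (K::'k itself) p q"
  unfolding eqv_def by (rule bicom_ideal.rel)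

lemma St_assoc: "eqv K (St (St a b) c) (St a (St b c))"
  by (rule eqv_rel) (auto simp: bicom_rels_def)
lemma St_comm: "eqv K (St a b) (St b a)"
  by (rule eqv_rel) (auto simp: bicom_rels_def)
lemma Od_assoc: "eqv K (Od (Od a b) c) (Od a (Od b c))"
  by (rule eqv_rel) (auto simp: bicom_rels_def)
lemma Od_comm: "eqv K (Od a b) (Od b a)"
  by (rule eqv_rel) (auto simp: bicom_rels_def)
lemma mix: "eqv K (St (Od a b) c) (Od a (St b c))"
  by (rule eqv_rel) (auto simp: bicom_rels_def)

lemma St_cong1:
  fixes K :: "'k::field itself" and p q r a a' b b' :: "'x bterm"
  assumes "eqv K a a'"
  shows "eqv K (St a b) (St a' b)"
proof -
  note assms
  then have "st_r (diff_mon a a' :: ('x,'k) vec) b \<in> bicom_ideal"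
    unfolding eqv_def by (rule bicom_ideal.str)
  moreover have "st_r (diff_mon a a' :: ('x,'k) vec) b = diff_mon (St a b) (St a' b)"
    by (auto simp: diff_mon_def mon_def st_r_def fun_eq_iff split: bterm.splits)
  ultimately show ?thesis unfolding eqv_def by simp
qed
lemma St_cong2:
  fixes K :: "'k::field itself" and p q r a a' b b' :: "'x bterm"
  assumes "eqv K b b'"
  shows "eqv K (St a b) (St a b')"
proof -
  note assms
  then have "st_l a (diff_mon b b' :: ('x,'k) vec) \<in> bicom_ideal"
    unfolding eqv_def by (rule bicom_ideal.stl)
  moreover have "st_l a (diff_mon b b' :: ('x,'k) vec) = diff_mon (St a b) (St a b')"
    by (auto simp: diff_mon_def mon_def st_l_def fun_eq_iff split: bterm.splits)
  ultimately show ?thesis unfolding eqv_def by simp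
qed
lemma Od_cong1:
  fixes K :: "'k::field itself" and p q r a a' b b' :: "'x bterm"
  assumes "eqv K a a'"
  shows "eqv K (Od a b) (Od a' b)"
proof -
  note assms
  then have "od_r (diff_mon a a' :: ('x,'k) vec) b \<in> bicom_ideal"
    unfolding eqv_def by (rule bicom_ideal.odr)
  moreover have "od_r (diff_mon a a' :: ('x,'k) vec) b = diff_mon (Od a b) (Od a' b)"
    by (auto simp: diff_mon_def mon_def od_r_def fun_eq_iff split: bterm.splits)
  ultimately show ?thesis unfolding eqv_def by simp
qed
lemma Od_cong2:
  fixes K :: "'k::field itself" and p q r a a' b b' :: "'x bterm"
  assumes "eqv K b b'"
  shows "eqv K (Od a b) (Od a b')"
proof -
  note assms
  then have "od_l a (diff_mon b b' :: ('x,'k) vec) \<in> bicom_ideal"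
    unfolding eqv_def by (rule bicom_ideal.odl)
  moreover have "od_l a (diff_mon b b' :: ('x,'k) vec) = diff_mon (Od a b) (Od a b')"
    by (auto simp: diff_mon_def mon_def od_l_def fun_eq_iff split: bterm.splits)
  ultimately show ?thesis unfolding eqv_def by simp
qed

lemma L1: "eqv K (Od (St x A) B) (St x (Od A B))"
proof -
  have "eqv K (Od (St x A) B) (Od B (St x A))" by (rule Od_comm)
  also have "eqv K \<dots> (Od B (St A x))" by (rule Od_cong2[OF St_comm])
  also have "eqv K \<dots> (St (Od B A) x)" by (rule eqv_sym[OF mix])
  also have "eqv K \<dots> (St x (Od B A))" by (rule St_comm)
  also have "eqv K \<dots> (St x (Od A B))" by (rule St_cong2[OF Od_comm])
  finally show ?thesis .
qed

lemma L1': "eqv K (Od A (St x B)) (St x (Od A B))"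
proof -
  have "eqv K (Od A (St x B)) (Od (St x B) A)" by (rule Od_comm)
  also have "eqv K \<dots> (St x (Od B A))" by (rule L1)
  also have "eqv K \<dots> (St x (Od A B))" by (rule St_cong2[OF Od_comm])
  finally show ?thesis .
qed

lemma L2: "eqv K (St Y (St x B)) (St x (St Y B))"
proof -
  have "eqv K (St Y (St x B)) (St (St x B) Y)" by (rule St_comm)
  also have "eqv K \<dots> (St x (St B Y))" by (rule St_assoc)
  also have "eqv K \<dots> (St x (St Y B))" by (rule St_cong2[OF St_comm])
  finally show ?thesis .
qed

lemma L3: "eqv K (St (Od y Z) Y) (St y (Od Y Z))"
proof -
  have "eqv K (St (Od y Z) Y) (St (Od Z y) Y)" by (rule St_cong1[OF Od_comm])
  also have "eqv K \<dots> (Od Z (St y Y))" by (rule mix)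
  also have "eqv K \<dots> (Od (St y Y) Z)" by (rule Od_comm)
  also have "eqv K \<dots> (St y (Od Y Z))" by (rule L1)
  finally show ?thesis .
qed

lemma L4: "eqv K (St (Od b Z) a) (St (Od a Z) b)"
proof -
  have "eqv K (St (Od b Z) a) (St (Od Z b) a)" by (rule St_cong1[OF Od_comm])
  also have "eqv K \<dots> (Od Z (St b a))" by (rule mix)
  also have "eqv K \<dots> (Od Z (St a b))" by (rule Od_cong2[OF St_comm])
  also have "eqv K \<dots> (St (Od Z a) b)" by (rule eqv_sym[OF mix])
  also have "eqv K \<dots> (St (Od a Z) b)" by (rule St_cong1[OF Od_comm])
  finally show ?thesis .
qed

lemma L5: "eqv K (St a (Od b Z)) (St b (Od a Z))"
proof -
  have "eqv K (St a (Od b Z)) (St (Od b Z) a)" by (rule St_comm)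
  also have "eqv K \<dots> (St (Od a Z) b)" by (rule L4)
  also have "eqv K \<dots> (St b (Od a Z))" by (rule St_comm)
  finally show ?thesis .
qed

lemma od_word_Cons: "zs \<noteq> [] \<Longrightarrow> od_word (y # zs) = Od (V y) (od_word zs)"
  by (cases zs) auto

lemma od_app: "ys \<noteq> [] \<Longrightarrow> ys' \<noteq> [] \<Longrightarrow>
   eqv K (Od (od_word ys) (od_word ys')) (od_word (ys @ ys'))"
proof (induction ys rule: od_word.induct)
  case 1 then show ?case by simp
next
  case (2 y) then show ?case by (simp add: od_word_Cons eqv_refl)
next
  case (3 y v va)
  have "eqv K (Od (od_word (y # v # va)) (od_word ys')) (Od (V y) (Od (od_word (v # va)) (od_word ys')))"
    by (simp add: Od_assoc)
  also have "eqv K \<dots> (Od (V y) (od_word ((v # va) @ ys')))"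
    using 3 by (intro Od_cong2) simp
  also have "\<dots> = od_word ((y # v # va) @ ys')" by simp
  finally show ?case .
qed

lemma P1: "ys \<noteq> [] \<Longrightarrow> ys' \<noteq> [] \<Longrightarrow>
  eqv K (Od (nf_word xs ys) (nf_word xs' ys')) (nf_word (xs @ xs') (ys @ ys'))"
proof (induction xs)
  case Nil
  then show ?case
  proof (induction xs')
    case Nil then show ?case by (simp add: od_app)
  next
    case (Cons x xs')
    have "eqv K (Od (nf_word [] ys) (nf_word (x # xs') ys')) (St (V x) (Od (nf_word [] ys) (nf_word xs' ys')))"
      by (simp add: L1')
    also have "eqv K \<dots> (St (V x) (nf_word xs' (ys @ ys')))"
      using Cons by (intro St_cong2) simp
    finally show ?case by simp
  qed
next
  case (Cons x xs)
  have "eqv K (Od (nf_word (x # xs) ys) (nf_word xs' ys')) (St (V x) (Od (nf_word xs ys) (nf_word xs' ys')))"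
    by (simp add: L1)
  also have "eqv K \<dots> (St (V x) (nf_word (xs @ xs') (ys @ ys')))"
    using Cons by (intro St_cong2) simp
  finally show ?case by simp
qed

lemma P2: "ys \<noteq> [] \<Longrightarrow> ys' \<noteq> [] \<Longrightarrow>
  eqv K (St (nf_word xs ys) (nf_word xs' ys')) (nf_word (xs @ xs' @ [hd ys]) (ys' @ tl ys))"
proof (induction xs)
  case Nil
  then show ?case
  proof (induction xs')
    case Nil
    show ?case
    proof (cases "tl ys = []")
      case True
      then have "ys = [hd ys]" using Nil by (cases ys) auto
      then obtain y where "ys = [y]" by blast
      then show ?thesis by (simp add: eqv_refl)
    next
      case False
      then obtain y zs where ys: "ys = y # zs" "zs \<noteq> []" using Nil by (cases ys) auto
      have "eqv K (St (Od (V y) (od_word zs)) (od_word ys')) (St (V y) (Od (od_word ys') (od_word zs)))"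
        by (rule L3)
      also have "eqv K \<dots> (St (V y) (od_word (ys' @ zs)))"
        using Nil ys by (intro St_cong2 od_app) auto
      finally show ?thesis using ys by (simp add: od_word_Cons)
    qed
  next
    case (Cons x xs')
    have "eqv K (St (nf_word [] ys) (nf_word (x # xs') ys')) (St (V x) (St (nf_word [] ys) (nf_word xs' ys')))"
      by (simp add: L2)
    also have "eqv K \<dots> (St (V x) (nf_word (xs' @ [hd ys]) (ys' @ tl ys)))"
      using Cons by (intro St_cong2) simp
    finally show ?case by simp
  qed
next
  case (Cons x xs)
  have "eqv K (St (nf_word (x # xs) ys) (nf_word xs' ys')) (St (V x) (St (nf_word xs ys) (nf_word xs' ys')))"
    by (simp add: St_assoc)
  also have "eqv K \<dots> (St (V x) (nf_word (xs @ xs' @ [hd ys]) (ys' @ tl ys)))"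
    using Cons by (intro St_cong2) simp
  finally show ?case by simp
qed

definition W :: "'x list \<Rightarrow> nat \<Rightarrow> 'x bterm" where
  "W zs k = nf_word (take k zs) (drop k zs)"

lemma W_Suc: "W (a # zs) (Suc k) = St (V a) (W zs k)"
  by (simp add: W_def)
lemma W_0: "W zs 0 = od_word zs"
  by (simp add: W_def)

lemma W_swap: "eqv K (W (p @ a # b # q) k) (W (p @ b # a # q) k)"
proof (induction p arbitrary: k)
  case Nil
  show ?case
  proof (cases k)
    case 0
    then show ?thesis
      by (cases q) (simp_all add: W_0 Od_comm Od_assoc eqv_trans[OF eqv_sym[OF Od_assoc] Od_cong1[OF Od_comm]] eqv_trans[OF _ Od_assoc])
  next
    case (Suc k')
    show ?thesis
    proof (cases k')
      case 0
      then show ?thesis using Suc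
        by (cases q) (simp_all add: W_Suc W_0 St_comm L5)
    next
      case (Suc k'')
      have "eqv K (St (V a) (St (V b) (W q k''))) (St (V b) (St (V a) (W q k'')))"
        by (rule L2)
      then show ?thesis using Suc \<open>k = Suc k'\<close> by (simp add: W_Suc)
    qed
  qed
next
  case (Cons c p)
  show ?case
  proof (cases k)
    case 0
    then show ?thesis using Cons[of 0]
      by (simp add: W_0 od_word_Cons Od_cong2)
  next
    case (Suc k')
    then show ?thesis using Cons[of k'] by (simp add: W_Suc St_cong2)
  qed
qed

lemma W_front: "eqv K (W (u @ a # v) k) (W (a # u @ v) k)"
proof (induction u arbitrary: v rule: rev_induct)
  case Nil then show ?case by (simp add: eqv_refl)
next
  case (snoc b u)
  have "eqv K (W ((u @ [b]) @ a # v) k) (W (u @ a # b # v) k)"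
    using W_swap[of K u b a v k] by simp
  also have "eqv K \<dots> (W (a # u @ b # v) k)" by (rule snoc)
  finally show ?case by simp
qed

lemma W_perm: "mset zs = mset zs' \<Longrightarrow> eqv K (W zs k) (W zs' k)"
proof (induction zs' arbitrary: zs k)
  case Nil then show ?case by (simp add: eqv_refl)
next
  case (Cons a zs')
  then have "a \<in> set zs" by (metis list.set_intros(1) set_mset_mset)
  then obtain u v where zs: "zs = u @ a # v" by (meson split_list)
  have m: "mset (u @ v) = mset zs'" using Cons.prems zs by simp
  have "eqv K (W zs k) (W (a # u @ v) k)" using zs W_front by simp
  also have "eqv K \<dots> (W (a # zs') k)"
  proof (cases k)
    case 0
    show ?thesis
    proof (cases "zs' = []")
      case True then show ?thesis using m 0 by (simp add: eqv_refl)
    next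
      case False
      then have "u @ v \<noteq> []" using m by auto
      then show ?thesis using 0 False Cons.IH[OF m, of 0]
        by (simp add: W_0 od_word_Cons Od_cong2)
    qed
  next
    case (Suc k')
    then show ?thesis using Cons.IH[OF m, of k'] by (simp add: W_Suc St_cong2)
  qed
  finally show ?case .
qed

lemma to_nf: "\<exists>xs ys. ys \<noteq> [] \<and> eqv K t (nf_word xs ys)"
proof (induction t)
  case (V x)
  then show ?case by (intro exI[of _ "[]"] exI[of _ "[x]"]) (simp add: eqv_refl)
next
  case (St a b)
  then obtain xs ys xs' ys' where h: "ys \<noteq> []" "eqv K a (nf_word xs ys)" "ys' \<noteq> []" "eqv K b (nf_word xs' ys')"
    by blast
  have "eqv K (St a b) (St (nf_word xs ys) b)" by (rule St_cong1[OF h(2)])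
  also have "eqv K \<dots> (St (nf_word xs ys) (nf_word xs' ys'))" by (rule St_cong2[OF h(4)])
  also have "eqv K \<dots> (nf_word (xs @ xs' @ [hd ys]) (ys' @ tl ys))" by (rule P2[OF h(1,3)])
  finally show ?case using h(3) by blast
next
  case (Od a b)
  then obtain xs ys xs' ys' where h: "ys \<noteq> []" "eqv K a (nf_word xs ys)" "ys' \<noteq> []" "eqv K b (nf_word xs' ys')"
    by blast
  have "eqv K (Od a b) (Od (nf_word xs ys) b)" by (rule Od_cong1[OF h(2)])
  also have "eqv K \<dots> (Od (nf_word xs ys) (nf_word xs' ys'))" by (rule Od_cong2[OF h(4)])
  also have "eqv K \<dots> (nf_word (xs @ xs') (ys @ ys'))" by (rule P1[OF h(1,3)])
  finally show ?case using h(3) by blast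
qed

lemma to_basis: "\<exists>w \<in> basis_words. eqv K (t::'x::linorder bterm) w"
proof -
  obtain xs ys where h: "ys \<noteq> []" "eqv K t (nf_word xs ys)" using to_nf by blast
  let ?L = "sort (xs @ ys)" and ?k = "length xs"
  have "nf_word xs ys = W (xs @ ys) ?k" by (simp add: W_def)
  moreover have "eqv K (W (xs @ ys) ?k) (W ?L ?k)" by (rule W_perm) simp
  ultimately have e: "eqv K t (W ?L ?k)" using h(2) eqv_trans by metis
  have "drop ?k ?L \<noteq> []" using h(1) by simp
  moreover have "sorted (take ?k ?L @ drop ?k ?L)" by simp
  ultimately have "W ?L ?k \<in> basis_words" unfolding W_def basis_words_def by blast
  then show ?thesis using e by blast
qed


lemma leaves_od: "ys \<noteq> [] \<Longrightarrow> leaves (od_word ys) = mset ys \<and> cnt (od_word ys) = 0"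
  by (induction ys rule: od_word.induct) auto

lemma ev_nf: "ys \<noteq> [] \<Longrightarrow> ev (nf_word xs ys) = (mset (xs @ ys), length xs)"
  by (induction xs) (auto simp: ev_def leaves_od)

lemma ev_inj_basis:
  assumes "v \<in> (basis_words :: 'x::linorder bterm set)" "w \<in> basis_words" "ev v = ev w"
  shows "v = w"
proof -
  obtain xs ys where v: "v = nf_word xs ys" "ys \<noteq> []" "sorted (xs @ ys)"
    using assms(1) unfolding basis_words_def by blast
  obtain xs' ys' where w: "w = nf_word xs' ys'" "ys' \<noteq> []" "sorted (xs' @ ys')"
    using assms(2) unfolding basis_words_def by blast
  have m: "mset (xs @ ys) = mset (xs' @ ys')" and l: "length xs = length xs'"
    using assms(3) v w by (auto simp: ev_nf)
  have "xs @ ys = xs' @ ys'"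
    using properties_for_sort[OF m v(3)] properties_for_sort[OF refl w(3)] by simp
  then have "xs = xs' \<and> ys = ys'" using l by (simp add: append_eq_append_conv)
  then show ?thesis using v w by simp
qed

lemma ideal_sum:
  fixes g :: "'a \<Rightarrow> ('x,'k::field) vec"
  assumes "finite A" "\<And>t. t \<in> A \<Longrightarrow> g t \<in> bicom_ideal"
  shows "(\<lambda>s. \<Sum>t\<in>A. a t * g t s) \<in> bicom_ideal"
  using assms
proof (induction A rule: finite_induct)
  case empty then show ?case by (simp add: bicom_ideal.zero)
next
  case (insert x F)
  have "(\<lambda>s. a x * g x s) \<in> bicom_ideal" using insert by (intro bicom_ideal.smult) auto
  then have "(\<lambda>s. (\<lambda>s. a x * g x s) s + (\<lambda>s. \<Sum>t\<in>F. a t * g t s) s) \<in> bicom_ideal"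
    using insert by (intro bicom_ideal.add) auto
  then show ?case using insert by simp
qed

theorem mainTheorem3:
  fixes dummy :: "'x::linorder itself" and dummyk :: "'k::field itself"
  shows "(\<forall>f :: ('x, 'k) vec. fin_supp f \<longrightarrow>
            (\<exists>S c. finite S \<and> S \<subseteq> basis_words \<and>
                   (\<lambda>s. f s - lincomb c S s) \<in> bicom_ideal))
       \<and> (\<forall>(S :: 'x bterm set) (c :: 'x bterm \<Rightarrow> 'k).
            finite S \<and> S \<subseteq> basis_words \<and> lincomb c S \<in> bicom_ideal
            \<longrightarrow> (\<forall>w\<in>S. c w = 0))"
proof (intro conjI allI impI)
  fix f :: "('x, 'k) vec"
  assume "fin_supp f"
  then have finA: "finite {t. f t \<noteq> 0}" by (simp add: fin_supp_def)
  define A where "A = {t. f t \<noteq> 0}"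
  define nf where "nf t = (SOME w. w \<in> basis_words \<and> eqv TYPE('k) t w)" for t :: "'x bterm"
  have nf: "nf t \<in> basis_words \<and> eqv TYPE('k) t (nf t)" for t
    unfolding nf_def by (rule someI_ex) (use to_basis in blast)
  define c where "c w = sum f {t \<in> A. nf t = w}" for w
  have fA: "finite A" using finA A_def by simp
  have 1: "f s = (\<Sum>t\<in>A. f t * mon t s)" for s
  proof -
    have "(\<Sum>t\<in>A. f t * mon t s) = (\<Sum>t\<in>A. if s = t then f t else 0)"
      by (intro sum.cong) (auto simp: mon_def)
    also have "\<dots> = f s" using fA by (simp add: sum.delta A_def)
    finally show ?thesis by simp
  qed
  have 2: "lincomb c (nf ` A) s = (\<Sum>t\<in>A. f t * mon (nf t) s)" for s
  proof -
    have "(\<Sum>t\<in>A. f t * mon (nf t) s)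
       = (\<Sum>w\<in>nf ` A. \<Sum>t\<in>{t \<in> A. nf t = w}. f t * mon (nf t) s)"
      using fA by (rule sum.image_gen)
    also have "\<dots> = (\<Sum>w\<in>nf ` A. \<Sum>t\<in>{t \<in> A. nf t = w}. f t * mon w s)"
      by (intro sum.cong) auto
    also have "\<dots> = lincomb c (nf ` A) s"
      by (simp add: lincomb_def c_def sum_distrib_right)
    finally show ?thesis by simp
  qed
  have "(\<lambda>s. f s - lincomb c (nf ` A) s) = (\<lambda>s. \<Sum>t\<in>A. f t * (diff_mon t (nf t) :: ('x,'k) vec) s)"
  proof
    fix s
    have "f s - lincomb c (nf ` A) s = (\<Sum>t\<in>A. f t * mon t s) - (\<Sum>t\<in>A. f t * mon (nf t) s)"
      by (subst 1, subst 2) (rule refl)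
    also have "\<dots> = (\<Sum>t\<in>A. f t * (diff_mon t (nf t) :: ('x,'k) vec) s)"
      by (simp add: diff_mon_def right_diff_distrib sum_subtractf)
    finally show "f s - lincomb c (nf ` A) s = (\<Sum>t\<in>A. f t * (diff_mon t (nf t) :: ('x,'k) vec) s)" .
  qed
  also have "\<dots> \<in> bicom_ideal"
    using fA nf by (intro ideal_sum) (auto simp: eqv_def)
  finally show "\<exists>S c. finite S \<and> S \<subseteq> basis_words \<and> (\<lambda>s. f s - lincomb c S s) \<in> bicom_ideal"
    using fA nf by blast
next
  fix S :: "'x bterm set" and c :: "'x bterm \<Rightarrow> 'k"
  assume h: "finite S \<and> S \<subseteq> basis_words \<and> lincomb c S \<in> bicom_ideal"
  show "\<forall>w\<in>S. c w = 0"
  proof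
    fix w assume w: "w \<in> S"
    have "Phi (lincomb c S) (ev w) = 0" using h Phi_ideal by blast
    moreover have "Phi (lincomb c S) (ev w) = (\<Sum>v\<in>S. c v * Phi (mon v) (ev w))"
      unfolding Phi_def lincomb_def
      by (subst sum.swap) (simp add: sum_distrib_left)
    moreover have "(\<Sum>v\<in>S. c v * Phi (mon v) (ev w)) = (\<Sum>v\<in>S. if v = w then c v else 0)"
      using h w by (intro sum.cong) (auto simp: Phi_mon dest: ev_inj_basis)
    moreover have "\<dots> = c w" using h w by (simp add: sum.delta)
    ultimately show "c w = 0" by simp
  qed
qed

end
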